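(* Let $K$ be any field, $m\ge 2$ an integer, $R=K[x_1,\dots,x_{3m+3}]$, and for $n=1,\dots,m$ set $s_n=x_{3n-2}x_{3n+2}$, $t_n=x_{3n+1}x_{3n+3}$, $u_n=x_{3n+1}x_{3n+2}$, $v_n=x_{3n-1}x_{3n+3}$, and $r_1=x_1x_2$. Let $I_m=(r_1, s_n,t_n,u_n,v_n : 1\le n\le m)$ and $J_m=(x_1x_2,\ s_n+t_n,\ u_n+v_n : 1\le n\le m)$. Then $I_m=\sqrt{J_m}$. *)

theory Defs
  imports "HOL-Library.Poly_Mapping"
begin

text \<open>Multivariate polynomials over a ring 'a in variables indexed by nat:
  a polynomial is a finitely supported map from monomials (finitely supported exponent vectors) to coefficients.\<close>

type_synonym 'a mpoly = "(nat \<Rightarrow>\<^sub>0 nat) \<Rightarrow>\<^sub>0 'a"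

definition mvar :: "nat \<Rightarrow> 'a::comm_ring_1 mpoly" where
  "mvar i = Poly_Mapping.single (Poly_Mapping.single i 1) 1"

definition poly_ring :: "nat \<Rightarrow> 'a::comm_ring_1 mpoly set" where
  "poly_ring N = {p. \<forall>mon\<in>Poly_Mapping.keys p. Poly_Mapping.keys mon \<subseteq> {1..N}}"

definition ideal_gen :: "'a::comm_ring_1 set \<Rightarrow> 'a set \<Rightarrow> 'a set" where
  "ideal_gen A G = {(\<Sum>g\<in>F. c g * g) | F c. finite F \<and> F \<subseteq> G \<and> (\<forall>g\<in>F. c g \<in> A)}"

definition radical :: "'a::comm_ring_1 set \<Rightarrow> 'a set \<Rightarrow> 'a set" where
  "radical A J = {f\<in>A. \<exists>n. f ^ n \<in> J}"

end

theory Submission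
  imports Defs
begin


lemma keys_add_nat: "Poly_Mapping.keys ((a::'b \<Rightarrow>\<^sub>0 nat) + b) = Poly_Mapping.keys a \<union> Poly_Mapping.keys b"
  by (auto simp: in_keys_iff lookup_add)

definition phi :: "nat set \<Rightarrow> 'a::comm_ring_1 mpoly \<Rightarrow> 'a mpoly" where
  "phi S f = Abs_poly_mapping (\<lambda>k. if Poly_Mapping.keys k \<subseteq> S then Poly_Mapping.lookup f k else 0)"

lemma lookup_phi: "Poly_Mapping.lookup (phi S f) k = (if Poly_Mapping.keys k \<subseteq> S then Poly_Mapping.lookup f k else 0)"
proof -
  have "finite {k. (if Poly_Mapping.keys k \<subseteq> S then Poly_Mapping.lookup f k else 0) \<noteq> 0}"
    by (rule finite_subset[OF _ finite_lookup[of f]]) auto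
  then show ?thesis unfolding phi_def by simp
qed

lemma phi_add: "phi S (f + g) = phi S f + phi S g"
  by (rule poly_mapping_eqI) (simp add: lookup_phi lookup_add)

lemma phi_zero: "phi S 0 = 0"
  by (rule poly_mapping_eqI) (simp add: lookup_phi)

lemma phi_one: "phi S 1 = 1"
  by (rule poly_mapping_eqI) (simp add: lookup_phi lookup_one when_def)

lemma phi_sum: "phi S (sum f A) = (\<Sum>a\<in>A. phi S (f a))"
  by (induction A rule: infinite_finite_induct) (auto simp: phi_zero phi_add)

lemma phi_mult: "phi S (f * g) = phi S f * phi S g"
proof (rule poly_mapping_eqI)
  fix k :: "nat \<Rightarrow>\<^sub>0 nat"
  have trm: "(if Poly_Mapping.keys l \<subseteq> S then Poly_Mapping.lookup f l else 0) *
      (\<Sum>q. Poly_Mapping.lookup (phi S g) q when k = l + q)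
     = (if Poly_Mapping.keys k \<subseteq> S then Poly_Mapping.lookup f l * (\<Sum>q. Poly_Mapping.lookup g q when k = l + q) else 0)" for l
  proof (cases "Poly_Mapping.keys l \<subseteq> S")
    case True
    have "(Poly_Mapping.lookup (phi S g) q when k = l + q) = (if Poly_Mapping.keys k \<subseteq> S then (Poly_Mapping.lookup g q when k = l + q) else 0)" for q
      using True by (auto simp: lookup_phi when_def keys_add_nat)
    then have "(\<Sum>q. Poly_Mapping.lookup (phi S g) q when k = l + q) = (if Poly_Mapping.keys k \<subseteq> S then (\<Sum>q. Poly_Mapping.lookup g q when k = l + q) else 0)"
      by simp
    then show ?thesis using True by simp
  next
    case False
    have "(Poly_Mapping.lookup g q when k = l + q) = 0" if "Poly_Mapping.keys k \<subseteq> S" for q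
      using False that by (auto simp: when_def keys_add_nat)
    then show ?thesis using False by simp
  qed
  have "Poly_Mapping.lookup (phi S f * phi S g) k = (\<Sum>l. (if Poly_Mapping.keys l \<subseteq> S then Poly_Mapping.lookup f l else 0) *
      (\<Sum>q. Poly_Mapping.lookup (phi S g) q when k = l + q))"
    by (simp add: lookup_mult lookup_phi)
  also have "\<dots> = (\<Sum>l. if Poly_Mapping.keys k \<subseteq> S then Poly_Mapping.lookup f l * (\<Sum>q. Poly_Mapping.lookup g q when k = l + q) else 0)"
    using trm by simp
  also have "\<dots> = Poly_Mapping.lookup (phi S (f * g)) k"
    by (simp add: lookup_mult lookup_phi)
  finally show "Poly_Mapping.lookup (phi S (f * g)) k = Poly_Mapping.lookup (phi S f * phi S g) k" by simp
qed

lemma phi_power: "phi S (f ^ n) = phi S f ^ n"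
  by (induction n) (simp_all add: phi_one phi_mult)

lemma phi_single: "phi S (Poly_Mapping.single k c) = (if Poly_Mapping.keys k \<subseteq> S then Poly_Mapping.single k c else 0)"
  by (rule poly_mapping_eqI) (simp add: lookup_phi lookup_single when_def)

lemma mvar_mult: "mvar i * mvar j = Poly_Mapping.single (Poly_Mapping.single i 1 + Poly_Mapping.single j 1) (1::'a::comm_ring_1)"
  by (simp add: mvar_def mult_single)

lemma "(p::'a::field mpoly) ^ n = 0 \<Longrightarrow> p = 0" by simp

lemma sum_singles: "f = (\<Sum>k\<in>Poly_Mapping.keys f. Poly_Mapping.single k (Poly_Mapping.lookup f k))"
  by (rule poly_mapping_eqI) (auto simp: lookup_sum lookup_single when_def in_keys_iff)



lemma pr_zero: "0 \<in> poly_ring N"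
  by (simp add: poly_ring_def)

lemma pr_add: "a \<in> poly_ring N \<Longrightarrow> b \<in> poly_ring N \<Longrightarrow> a + b \<in> poly_ring N"
  unfolding poly_ring_def using keys_add[of a b] by blast

lemma pr_uminus: "a \<in> poly_ring N \<Longrightarrow> - a \<in> poly_ring N"
  unfolding poly_ring_def by simp

lemma pr_diff: "a \<in> poly_ring N \<Longrightarrow> b \<in> poly_ring N \<Longrightarrow> a - b \<in> poly_ring N"
  using pr_add[OF _ pr_uminus] by (metis diff_conv_add_uminus)

lemma pr_mult: "a \<in> poly_ring N \<Longrightarrow> b \<in> poly_ring N \<Longrightarrow> a * b \<in> poly_ring N"
  unfolding poly_ring_def using keys_mult[of a b] by (fastforce simp: keys_add_nat)

lemma pr_one: "1 \<in> poly_ring N"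
  unfolding poly_ring_def by simp

lemma pr_single: "Poly_Mapping.keys k \<subseteq> {1..N} \<Longrightarrow> Poly_Mapping.single k c \<in> poly_ring N"
  unfolding poly_ring_def by simp

lemma pr_power: "a \<in> poly_ring N \<Longrightarrow> a ^ n \<in> poly_ring N"
  by (induction n) (simp_all add: pr_one pr_mult)

lemma pr_of_nat: "of_nat n \<in> poly_ring N"
  by (induction n) (simp_all add: pr_zero pr_one pr_add)

lemma pr_mvar: "i \<in> {1..N} \<Longrightarrow> mvar i \<in> poly_ring N"
  unfolding mvar_def by (rule pr_single) simp

lemma ig_zero: "0 \<in> ideal_gen A G"
  unfolding ideal_gen_def by (rule CollectI, rule exI[of _ "{}"]) auto

lemma ig_gen: "c \<in> A \<Longrightarrow> g \<in> G \<Longrightarrow> c * g \<in> ideal_gen A G"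
  unfolding ideal_gen_def
  by (rule CollectI, rule exI[of _ "{g}"], rule exI[of _ "\<lambda>_. c"]) auto

lemma ig_add:
  assumes "a \<in> ideal_gen (poly_ring N) G" "b \<in> ideal_gen (poly_ring N) G"
  shows "a + b \<in> ideal_gen (poly_ring N) G"
proof -
  obtain F1 c1 where 1: "a = (\<Sum>g\<in>F1. c1 g * g)" "finite F1" "F1 \<subseteq> G" "\<forall>g\<in>F1. c1 g \<in> poly_ring N"
    using assms(1) unfolding ideal_gen_def by blast
  obtain F2 c2 where 2: "b = (\<Sum>g\<in>F2. c2 g * g)" "finite F2" "F2 \<subseteq> G" "\<forall>g\<in>F2. c2 g \<in> poly_ring N"
    using assms(2) unfolding ideal_gen_def by blast
  define c where "c g = (if g \<in> F1 then c1 g else 0) + (if g \<in> F2 then c2 g else 0)" for g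
  have "(\<Sum>g\<in>F1 \<union> F2. c g * g) = (\<Sum>g\<in>F1 \<union> F2. (if g \<in> F1 then c1 g * g else 0) + (if g \<in> F2 then c2 g * g else 0))"
    unfolding c_def by (rule sum.cong) (auto simp: distrib_right)
  also have "\<dots> = (\<Sum>g\<in>F1 \<union> F2. (if g \<in> F1 then c1 g * g else 0)) + (\<Sum>g\<in>F1 \<union> F2. (if g \<in> F2 then c2 g * g else 0))"
    by (rule sum.distrib)
  also have "\<dots> = a + b"
    using 1 2 by (simp add: sum.inter_restrict[symmetric] Int_absorb1)
  finally have "a + b = (\<Sum>g\<in>F1 \<union> F2. c g * g)" by simp
  moreover have "\<forall>g\<in>F1 \<union> F2. c g \<in> poly_ring N"
    using 1 2 by (auto simp: c_def pr_add pr_zero)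
  ultimately show ?thesis using 1 2 unfolding ideal_gen_def by blast
qed

lemma ig_mult:
  assumes "r \<in> poly_ring N" "a \<in> ideal_gen (poly_ring N) G"
  shows "r * a \<in> ideal_gen (poly_ring N) G"
proof -
  obtain F1 c1 where 1: "a = (\<Sum>g\<in>F1. c1 g * g)" "finite F1" "F1 \<subseteq> G" "\<forall>g\<in>F1. c1 g \<in> poly_ring N"
    using assms(2) unfolding ideal_gen_def by blast
  have "r * a = (\<Sum>g\<in>F1. (r * c1 g) * g)" using 1 by (simp add: sum_distrib_left mult.assoc)
  moreover have "\<forall>g\<in>F1. r * c1 g \<in> poly_ring N" using 1 assms(1) by (simp add: pr_mult)
  ultimately show ?thesis using 1 unfolding ideal_gen_def by (auto intro!: exI[of _ F1] exI[of _ "\<lambda>g. r * c1 g"])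
qed

lemma ig_sum:
  "(\<And>x. x \<in> X \<Longrightarrow> f x \<in> ideal_gen (poly_ring N) G) \<Longrightarrow> sum f X \<in> ideal_gen (poly_ring N) G"
  by (induction X rule: infinite_finite_induct) (auto simp: ig_zero ig_add)

lemma ig_minimal:
  assumes "0 \<in> Q" "\<And>a b. a \<in> Q \<Longrightarrow> b \<in> Q \<Longrightarrow> a + b \<in> Q"
    "\<And>r a. r \<in> poly_ring N \<Longrightarrow> a \<in> Q \<Longrightarrow> r * a \<in> Q" "G \<subseteq> Q"
  shows "ideal_gen (poly_ring N) G \<subseteq> Q"
proof
  fix f assume "f \<in> ideal_gen (poly_ring N) G"
  then obtain F c where 1: "f = (\<Sum>g\<in>F. c g * g)" "finite F" "F \<subseteq> G" "\<forall>g\<in>F. c g \<in> poly_ring N"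
    unfolding ideal_gen_def by blast
  have "(\<Sum>g\<in>F'. c g * g) \<in> Q" if "F' \<subseteq> F" for F'
    using finite_subset[OF that 1(2)] that
  proof (induction F' rule: finite_induct)
    case empty then show ?case using assms(1) by simp
  next
    case (insert x F')
    then show ?case using assms 1 by auto
  qed
  then show "f \<in> Q" using 1 by simp
qed

lemma ig_subset:
  assumes "G \<subseteq> poly_ring N" shows "ideal_gen (poly_ring N) G \<subseteq> poly_ring N"
  by (rule ig_minimal) (use assms in \<open>auto simp: pr_zero pr_add pr_mult\<close>)

lemma rad_J: "G \<subseteq> poly_ring N \<Longrightarrow> f \<in> ideal_gen (poly_ring N) G \<Longrightarrow> f \<in> radical (poly_ring N) (ideal_gen (poly_ring N) G)"
  unfolding radical_def using ig_subset[of G N] by (auto intro!: exI[of _ 1])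

lemma rad_mult:
  assumes "r \<in> poly_ring N" "a \<in> radical (poly_ring N) (ideal_gen (poly_ring N) G)"
  shows "r * a \<in> radical (poly_ring N) (ideal_gen (poly_ring N) G)"
proof -
  obtain n where "a \<in> poly_ring N" "a ^ n \<in> ideal_gen (poly_ring N) G" using assms(2) unfolding radical_def by blast
  then have "(r * a) ^ n \<in> ideal_gen (poly_ring N) G"
    using ig_mult[OF pr_power[OF assms(1)]] by (simp add: power_mult_distrib)
  then show ?thesis unfolding radical_def using assms(1) \<open>a \<in> poly_ring N\<close> pr_mult by blast
qed

lemma rad_add:
  assumes "a \<in> radical (poly_ring N) (ideal_gen (poly_ring N) G)" "b \<in> radical (poly_ring N) (ideal_gen (poly_ring N) G)"
  shows "a + b \<in> radical (poly_ring N) (ideal_gen (poly_ring N) G)"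
proof -
  obtain p where p: "a \<in> poly_ring N" "a ^ p \<in> ideal_gen (poly_ring N) G" using assms(1) unfolding radical_def by blast
  obtain q where q: "b \<in> poly_ring N" "b ^ q \<in> ideal_gen (poly_ring N) G" using assms(2) unfolding radical_def by blast
  have "(a + b) ^ (p + q) = (\<Sum>k\<le>p+q. of_nat (p + q choose k) * a ^ k * b ^ (p + q - k))"
    by (rule binomial_ring)
  also have "\<dots> \<in> ideal_gen (poly_ring N) G"
  proof (rule ig_sum)
    fix k assume k: "k \<in> {..p+q}"
    show "of_nat (p + q choose k) * a ^ k * b ^ (p + q - k) \<in> ideal_gen (poly_ring N) G"
    proof (cases "p \<le> k")
      case True
      then have e: "a ^ k = a ^ (k - p) * a ^ p" by (simp add: power_add[symmetric])
      have "of_nat (p + q choose k) * a ^ k * b ^ (p + q - k) = (of_nat (p + q choose k) * a ^ (k - p) * b ^ (p + q - k)) * a ^ p"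
        by (simp add: e mult_ac)
      then show ?thesis using p q by (metis ig_mult pr_mult pr_power pr_of_nat)
    next
      case False
      then have e: "b ^ (p + q - k) = b ^ (p - k) * b ^ q" by (simp add: power_add[symmetric])
      have "of_nat (p + q choose k) * a ^ k * b ^ (p + q - k) = (of_nat (p + q choose k) * a ^ k * b ^ (p - k)) * b ^ q"
        by (simp add: e mult_ac)
      then show ?thesis using p q by (metis ig_mult pr_mult pr_power pr_of_nat)
    qed
  qed
  finally show ?thesis unfolding radical_def using p q pr_add by blast
qed

lemma rad_zero: "0 \<in> radical (poly_ring N) (ideal_gen (poly_ring N) G)"
  unfolding radical_def using ig_zero pr_zero by (auto intro!: exI[of _ 1])

lemma rad_uminus:
  assumes "a \<in> radical (poly_ring N) (ideal_gen (poly_ring N) G)"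
  shows "- a \<in> radical (poly_ring N) (ideal_gen (poly_ring N) G)"
  using rad_mult[OF pr_uminus[OF pr_one] assms] by simp

lemma rad_diff:
  assumes "a \<in> radical (poly_ring N) (ideal_gen (poly_ring N) G)" "b \<in> radical (poly_ring N) (ideal_gen (poly_ring N) G)"
  shows "a - b \<in> radical (poly_ring N) (ideal_gen (poly_ring N) G)"
  using rad_add[OF assms(1) rad_uminus[OF assms(2)]] by simp

lemma rad_sq:
  assumes "a \<in> poly_ring N" "a ^ 2 \<in> radical (poly_ring N) (ideal_gen (poly_ring N) G)"
  shows "a \<in> radical (poly_ring N) (ideal_gen (poly_ring N) G)"
proof -
  obtain n where "(a ^ 2) ^ n \<in> ideal_gen (poly_ring N) G" using assms(2) unfolding radical_def by blast
  then have "a ^ (2 * n) \<in> ideal_gen (poly_ring N) G" by (simp add: power_mult)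
  then show ?thesis unfolding radical_def using assms(1) by blast
qed



lemma edge_radical:
  fixes G :: "'a::field mpoly set"
  assumes G: "\<forall>g\<in>G. \<exists>i j. i \<noteq> j \<and> i \<in> {1..N} \<and> j \<in> {1..N} \<and> g = mvar i * mvar j"
    and f: "f \<in> poly_ring N" and fn: "f ^ n \<in> ideal_gen (poly_ring N) G"
  shows "f \<in> ideal_gen (poly_ring N) G"
proof (rule ccontr)
  assume nf: "f \<notin> ideal_gen (poly_ring N) G"
  have "\<exists>k\<in>Poly_Mapping.keys f. \<forall>i j. i \<noteq> j \<and> mvar i * mvar j \<in> G \<longrightarrow> \<not> (i \<in> Poly_Mapping.keys k \<and> j \<in> Poly_Mapping.keys k)"
  proof (rule ccontr)
    assume "\<not> ?thesis"
    then have all: "\<forall>k\<in>Poly_Mapping.keys f. \<exists>i j. i \<noteq> j \<and> mvar i * mvar j \<in> G \<and> i \<in> Poly_Mapping.keys k \<and> j \<in> Poly_Mapping.keys k"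
      by blast
    have "(\<Sum>k\<in>Poly_Mapping.keys f. Poly_Mapping.single k (Poly_Mapping.lookup f k)) \<in> ideal_gen (poly_ring N) G"
    proof (rule ig_sum)
      fix k assume k: "k \<in> Poly_Mapping.keys f"
      then obtain i j where ij: "i \<noteq> j" "mvar i * mvar j \<in> G" "i \<in> Poly_Mapping.keys k" "j \<in> Poly_Mapping.keys k"
        using all by blast
      define e where "e = Poly_Mapping.single i 1 + Poly_Mapping.single j (1::nat)"
      have ke: "k - e + e = k"
      proof (rule poly_mapping_eqI)
        fix y
        show "Poly_Mapping.lookup (k - e + e) y = Poly_Mapping.lookup k y"
        proof -
          have le: "Poly_Mapping.lookup e y \<le> Poly_Mapping.lookup k y"
          proof -
            have "Poly_Mapping.lookup e y = (if y = i then 1 else 0) + (if y = j then 1 else 0)"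
              by (simp add: e_def lookup_add lookup_single when_def)
            moreover have "Poly_Mapping.lookup k i \<noteq> 0" "Poly_Mapping.lookup k j \<noteq> 0"
              using ij(3,4) by (simp_all add: in_keys_iff)
            ultimately show ?thesis using ij(1) by auto
          qed
          show ?thesis using le by (simp add: lookup_add lookup_minus)
        qed
      qed
      have "Poly_Mapping.keys (k - e) \<subseteq> Poly_Mapping.keys k"
        by (auto simp: in_keys_iff lookup_minus)
      moreover have "Poly_Mapping.keys k \<subseteq> {1..N}" using f k unfolding poly_ring_def by blast
      ultimately have inR: "Poly_Mapping.single (k - e) (Poly_Mapping.lookup f k) \<in> poly_ring N"
        by (intro pr_single) blast
      have eq: "Poly_Mapping.single k (Poly_Mapping.lookup f k) = Poly_Mapping.single (k - e) (Poly_Mapping.lookup f k) * (mvar i * mvar j)"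
      proof -
        have "mvar i * mvar j = Poly_Mapping.single e (1::'a)" unfolding e_def by (rule mvar_mult)
        then have "Poly_Mapping.single (k - e) (Poly_Mapping.lookup f k) * (mvar i * mvar j)
           = Poly_Mapping.single (k - e + e) (Poly_Mapping.lookup f k * 1)" by (simp only: mult_single)
        then show ?thesis by (simp only: ke mult_1_right)
      qed
      show "Poly_Mapping.single k (Poly_Mapping.lookup f k) \<in> ideal_gen (poly_ring N) G"
        unfolding eq by (rule ig_gen[OF inR ij(2)])
    qed
    then have "f \<in> ideal_gen (poly_ring N) G" by (simp only: sum_singles[of f, symmetric])
    then show False using nf by blast
  qed
  then obtain k where k: "k \<in> Poly_Mapping.keys f"
    and indep: "\<And>i j. i \<noteq> j \<Longrightarrow> mvar i * mvar j \<in> G \<Longrightarrow> \<not> (i \<in> Poly_Mapping.keys k \<and> j \<in> Poly_Mapping.keys k)"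
    by blast
  define S where "S = Poly_Mapping.keys k"
  have phiG: "phi S g = 0" if gG: "g \<in> G" for g
  proof -
    obtain i j where ij0: "i \<noteq> j \<and> i \<in> {1..N} \<and> j \<in> {1..N} \<and> g = mvar i * mvar j"
      using bspec[OF G gG] by (elim exE) (erule that)
    then have ij: "i \<noteq> j" "g = mvar i * mvar j" by simp_all
    have "Poly_Mapping.keys (Poly_Mapping.single i 1 + Poly_Mapping.single j (1::nat)) = {i, j}"
      by (auto simp: keys_add_nat)
    moreover have "\<not> {i, j} \<subseteq> S" using indep[OF ij(1)] gG ij(2) S_def by auto
    ultimately show ?thesis using ij by (auto simp: mvar_mult phi_single)
  qed
  obtain F c where Fc: "f ^ n = (\<Sum>g\<in>F. c g * g)" "F \<subseteq> G"
    using fn unfolding ideal_gen_def by blast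
  have "phi S (f ^ n) = 0"
    using Fc phiG by (auto simp: phi_sum phi_mult intro!: sum.neutral)
  then have "phi S f ^ n = 0" by (simp add: phi_power)
  then have "phi S f = 0" by simp
  then have "Poly_Mapping.lookup (phi S f) k = 0" by simp
  then show False using k by (simp add: lookup_phi S_def in_keys_iff)
qed


lemma step_lemma:
  fixes Q R :: "'a::comm_ring_1 set"
  assumes add: "\<And>a b. a \<in> Q \<Longrightarrow> b \<in> Q \<Longrightarrow> a + b \<in> Q"
    and diff: "\<And>a b. a \<in> Q \<Longrightarrow> b \<in> Q \<Longrightarrow> a - b \<in> Q"
    and mult: "\<And>r a. r \<in> R \<Longrightarrow> a \<in> Q \<Longrightarrow> r * a \<in> Q"
    and sq: "\<And>a. a \<in> R \<Longrightarrow> a ^ 2 \<in> Q \<Longrightarrow> a \<in> Q"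
    and Rm: "\<And>a b. a \<in> R \<Longrightarrow> b \<in> R \<Longrightarrow> a * b \<in> R"
    and R: "p \<in> R" "q \<in> R" "p' \<in> R" "q' \<in> R" "w \<in> R"
    and H1: "p * q \<in> Q" and H2: "p * q' + p' * w \<in> Q" and H3: "p' * q' + q * w \<in> Q"
  shows "q * w \<in> Q \<and> p' * q' \<in> Q \<and> p * q' \<in> Q \<and> p' * w \<in> Q"
proof -
  have A: "p' * q * w \<in> Q"
  proof -
    have "p' * q * w = q * (p * q' + p' * w) - q' * (p * q)" by (simp add: algebra_simps)
    then show ?thesis using diff mult R H1 H2 by metis
  qed
  have "(q * w) ^ 2 = (q * w) * (p' * q' + q * w) - q' * (p' * q * w)"
    by (simp add: algebra_simps power2_eq_square)
  then have "(q * w) ^ 2 \<in> Q" using diff mult R Rm H3 A by metis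
  then have qw: "q * w \<in> Q" using sq Rm R by blast
  have pq': "p' * q' \<in> Q"
  proof -
    have "p' * q' = (p' * q' + q * w) - q * w" by simp
    then show ?thesis using diff H3 qw by metis
  qed
  have B: "p * p' * q' \<in> Q"
  proof -
    have "p * p' * q' = p * (p' * q' + q * w) - w * (p * q)" by (simp add: algebra_simps)
    then show ?thesis using diff mult R H1 H3 by metis
  qed
  have "(p * q') ^ 2 = (p * q') * (p * q' + p' * w) - w * (p * p' * q')"
    by (simp add: algebra_simps power2_eq_square)
  then have "(p * q') ^ 2 \<in> Q" using diff mult R Rm H2 B by metis
  then have pq: "p * q' \<in> Q" using sq Rm R by blast
  have pw: "p' * w \<in> Q"
  proof -
    have "p' * w = (p * q' + p' * w) - p * q'" by simp
    then show ?thesis using diff H2 pq by metis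
  qed
  show ?thesis using qw pq' pq pw by blast
qed



theorem mainTheorem6:
  fixes m :: nat
  assumes "m \<ge> 2"
  defines "x \<equiv> (mvar :: nat \<Rightarrow> 'a::field mpoly)"
  defines "s \<equiv> (\<lambda>n. x (3*n-2) * x (3*n+2))"
    and "t \<equiv> (\<lambda>n. x (3*n+1) * x (3*n+3))"
    and "u \<equiv> (\<lambda>n. x (3*n+1) * x (3*n+2))"
    and "v \<equiv> (\<lambda>n. x (3*n-1) * x (3*n+3))"
  defines "R \<equiv> (poly_ring (3*m+3) :: 'a mpoly set)"
  defines "I \<equiv> ideal_gen R ({x 1 * x 2} \<union> s ` {1..m} \<union> t ` {1..m} \<union> u ` {1..m} \<union> v ` {1..m})"
    and "J \<equiv> ideal_gen R ({x 1 * x 2} \<union> (\<lambda>n. s n + t n) ` {1..m} \<union> (\<lambda>n. u n + v n) ` {1..m})"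
  shows "I = radical R J"
proof -
  define N where "N = 3*m+3"
  define GI where "GI = ({x 1 * x 2} \<union> s ` {1..m} \<union> t ` {1..m} \<union> u ` {1..m} \<union> v ` {1..m})"
  define GJ where "GJ = ({x 1 * x 2} \<union> (\<lambda>n. s n + t n) ` {1..m} \<union> (\<lambda>n. u n + v n) ` {1..m})"
  have RN: "R = poly_ring N" unfolding R_def N_def ..
  have I': "I = ideal_gen (poly_ring N) GI" unfolding I_def GI_def RN ..
  have J': "J = ideal_gen (poly_ring N) GJ" unfolding J_def GJ_def RN ..
  have xR: "x i \<in> poly_ring N" if "1 \<le> i" "i \<le> N" for i
    unfolding x_def by (rule pr_mvar) (use that in auto)
  have xR': "x i \<in> poly_ring N" if "1 \<le> n" "n \<le> m" "3*n-2 \<le> i" "i \<le> 3*n+3" for i n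
    using xR that unfolding N_def by auto
  have GJR: "GJ \<subseteq> poly_ring N"
  proof -
    have "x 1 * x 2 \<in> poly_ring N" by (rule pr_mult; rule xR) (auto simp: N_def)
    moreover have "s n + t n \<in> poly_ring N" "u n + v n \<in> poly_ring N" if "n \<in> {1..m}" for n
      unfolding s_def t_def u_def v_def using that
      by (auto intro!: pr_add pr_mult xR'[of n])
    ultimately show ?thesis unfolding GJ_def by auto
  qed
  let ?Q = "radical (poly_ring N) (ideal_gen (poly_ring N) GJ)"
  have QJ: "g \<in> ?Q" if "g \<in> GJ" for g
    using rad_J[OF GJR ig_gen[OF pr_one that]] by simp
  have lvl: "x (3*n-2) * x (3*n-1) \<in> ?Q \<Longrightarrow> 1 \<le> n \<Longrightarrow> n \<le> m \<Longrightarrow>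
     v n \<in> ?Q \<and> u n \<in> ?Q \<and> s n \<in> ?Q \<and> t n \<in> ?Q" for n
  proof -
    assume H1: "x (3*n-2) * x (3*n-1) \<in> ?Q" and n: "1 \<le> n" "n \<le> m"
    have H2: "x (3*n-2) * x (3*n+2) + x (3*n+1) * x (3*n+3) \<in> ?Q"
      using QJ n unfolding GJ_def s_def t_def by auto
    have H3: "x (3*n+1) * x (3*n+2) + x (3*n-1) * x (3*n+3) \<in> ?Q"
      using QJ n unfolding GJ_def u_def v_def by auto
    have "x (3*n-1) * x (3*n+3) \<in> ?Q \<and> x (3*n+1) * x (3*n+2) \<in> ?Q \<and> x (3*n-2) * x (3*n+2) \<in> ?Q \<and> x (3*n+1) * x (3*n+3) \<in> ?Q"
    proof (rule step_lemma[where R="poly_ring N"])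
      show "\<And>a b. a \<in> ?Q \<Longrightarrow> b \<in> ?Q \<Longrightarrow> a + b \<in> ?Q" by (rule rad_add)
      show "\<And>a b. a \<in> ?Q \<Longrightarrow> b \<in> ?Q \<Longrightarrow> a - b \<in> ?Q" by (rule rad_diff)
      show "\<And>r a. r \<in> poly_ring N \<Longrightarrow> a \<in> ?Q \<Longrightarrow> r * a \<in> ?Q" by (rule rad_mult)
      show "\<And>a. a \<in> poly_ring N \<Longrightarrow> a ^ 2 \<in> ?Q \<Longrightarrow> a \<in> ?Q" by (rule rad_sq)
      show "\<And>a b. a \<in> poly_ring N \<Longrightarrow> b \<in> poly_ring N \<Longrightarrow> a * b \<in> poly_ring N" by (rule pr_mult)
    qed (use n H1 H2 H3 in \<open>auto intro: xR'[of n]\<close>)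
    then show ?thesis unfolding s_def t_def u_def v_def by simp
  qed
  have base: "x (3*n-2) * x (3*n-1) \<in> ?Q" if "1 \<le> n" "n \<le> m" for n
    using that
  proof (induction n rule: nat_induct_at_least)
    case base
    have "x 1 * x 2 \<in> ?Q" using QJ unfolding GJ_def by auto
    then show ?case by simp
  next
    case (Suc n)
    then have "u n \<in> ?Q" using lvl by simp
    moreover have "3 * Suc n - 2 = 3*n+1" "3 * Suc n - 1 = 3*n+2" by simp_all
    ultimately show ?case unfolding u_def by simp
  qed
  have GIQ: "GI \<subseteq> ?Q"
  proof -
    have "x 1 * x 2 \<in> ?Q" using QJ unfolding GJ_def by auto
    moreover have "v n \<in> ?Q \<and> u n \<in> ?Q \<and> s n \<in> ?Q \<and> t n \<in> ?Q" if "n \<in> {1..m}" for n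
      using lvl[OF base] that by auto
    ultimately show ?thesis unfolding GI_def by auto
  qed
  have IQ: "I \<subseteq> radical R J"
    unfolding I' J' RN
    by (rule ig_minimal) (use GIQ in \<open>auto intro: rad_zero rad_add rad_mult\<close>)
  have GJI: "GJ \<subseteq> I"
  proof -
    have g: "g \<in> I" if "g \<in> GI" for g
      unfolding I' using ig_gen[OF pr_one that] by simp
    show ?thesis unfolding GJ_def
      using g unfolding GI_def by (auto intro!: ig_add simp: I')
  qed
  have JI: "J \<subseteq> I"
    unfolding J' by (rule ig_minimal) (use GJI in \<open>auto simp: I' intro: ig_zero ig_add ig_mult\<close>)
  have GIform: "\<forall>g\<in>GI. \<exists>i j. i \<noteq> j \<and> i \<in> {1..N} \<and> j \<in> {1..N} \<and> g = mvar i * mvar j"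
  proof -
    have ex: "\<exists>a b. a \<noteq> b \<and> a \<in> {1..N} \<and> b \<in> {1..N} \<and> mvar i * mvar j = mvar a * mvar b"
      if "i \<noteq> j" "1 \<le> i" "i \<le> N" "1 \<le> j" "j \<le> N" for i j
      using that by auto
    show ?thesis unfolding GI_def
    proof (intro ballI)
      fix g assume "g \<in> {x 1 * x 2} \<union> s ` {1..m} \<union> t ` {1..m} \<union> u ` {1..m} \<union> v ` {1..m}"
      then consider "g = x 1 * x 2" | n where "n \<in> {1..m}" "g = s n" | n where "n \<in> {1..m}" "g = t n"
        | n where "n \<in> {1..m}" "g = u n" | n where "n \<in> {1..m}" "g = v n" by blast
      then show "\<exists>i j. i \<noteq> j \<and> i \<in> {1..N} \<and> j \<in> {1..N} \<and> g = mvar i * mvar j"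
      proof cases
        case 1 then show ?thesis unfolding x_def by (simp only:) (rule ex, auto simp: N_def)
      next
        case 2 then show ?thesis unfolding s_def x_def by (simp only:) (rule ex, auto simp: N_def)
      next
        case 3 then show ?thesis unfolding t_def x_def by (simp only:) (rule ex, auto simp: N_def)
      next
        case 4 then show ?thesis unfolding u_def x_def by (simp only:) (rule ex, auto simp: N_def)
      next
        case 5 then show ?thesis unfolding v_def x_def by (simp only:) (rule ex, auto simp: N_def)
      qed
    qed
  qed
  have QI: "radical R J \<subseteq> I"
  proof
    fix f assume "f \<in> radical R J"
    then obtain k where f: "f \<in> poly_ring N" "f ^ k \<in> J" unfolding radical_def RN by blast
    then have "f ^ k \<in> ideal_gen (poly_ring N) GI" using JI I' by auto
    then show "f \<in> I" unfolding I' by (rule edge_radical[OF GIform f(1)])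
  qed
  show ?thesis using IQ QI by blast
qed


end
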